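(* Let $n\ge 4$ and $1\le k<\frac{n}{2}$ be integers and let $D$ be the diameter of $B(n,k)$. If $n\neq 2k+1$ then $D=2k+2$; if $n=2k+1$ then $D=2k+1$.
   Context: For integers $n\ge 4$ and $1\le k<\frac n2$, let $[n]=\{1,\dots,n\}$. The graph $B(n,k)$ has vertex set $V=\{v\subset[n] : |v|\in\{k,k+1\}\}$, and two vertices $v,w$ are adjacent iff $v\subset w$ or $w\subset v$. *)

theory Defs
  imports Main "HOL-Library.Extended_Nat"
begin

definition B_verts :: "nat \<Rightarrow> nat \<Rightarrow> nat set set" where
  "B_verts n k = {v. v \<subseteq> {1..n} \<and> (card v = k \<or> card v = k + 1)}"

definition B_adj :: "nat \<Rightarrow> nat \<Rightarrow> nat set \<Rightarrow> nat set \<Rightarrow> bool" where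
  "B_adj n k v w \<longleftrightarrow> v \<in> B_verts n k \<and> w \<in> B_verts n k \<and> (v \<subset> w \<or> w \<subset> v)"

definition B_walk :: "nat \<Rightarrow> nat \<Rightarrow> nat set list \<Rightarrow> bool" where
  "B_walk n k xs \<longleftrightarrow> xs \<noteq> [] \<and> set xs \<subseteq> B_verts n k \<and>
     (\<forall>i. i + 1 < length xs \<longrightarrow> B_adj n k (xs ! i) (xs ! (i + 1)))"

text \<open>Graph distance (infinite if no walk exists) and diameter.\<close>

definition B_dist :: "nat \<Rightarrow> nat \<Rightarrow> nat set \<Rightarrow> nat set \<Rightarrow> enat" where
  "B_dist n k u v = (INF xs \<in> {xs. B_walk n k xs \<and> hd xs = u \<and> last xs = v}.
                        enat (length xs - 1))"

definition B_diam :: "nat \<Rightarrow> nat \<Rightarrow> enat" where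
  "B_diam n k = (SUP u \<in> B_verts n k. SUP v \<in> B_verts n k. B_dist n k u v)"

end

theory Submission
  imports Defs
begin

abbreviation sd :: "nat set \<Rightarrow> nat set \<Rightarrow> nat set" where
  "sd a b \<equiv> (a - b) \<union> (b - a)"

lemma verts_fin: "v \<in> B_verts n k \<Longrightarrow> finite v"
  unfolding B_verts_def using finite_subset by blast

lemma walk_single[simp]: "B_walk n k [x] \<longleftrightarrow> x \<in> B_verts n k"
  unfolding B_walk_def by auto

lemma walk_cons2[simp]: "B_walk n k (x # y # ys) \<longleftrightarrow> B_adj n k x y \<and> B_walk n k (y # ys)"
proof
  assume h: "B_walk n k (x # y # ys)"
  have "B_adj n k x y" using h unfolding B_walk_def by (metis One_nat_def add_0 length_Cons
        nth_Cons_0 nth_Cons_Suc plus_1_eq_Suc zero_less_Suc less_Suc_eq_0_disj)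
  moreover have "B_walk n k (y # ys)" unfolding B_walk_def
  proof (intro conjI allI impI)
    show "set (y # ys) \<subseteq> B_verts n k" using h unfolding B_walk_def by auto
    fix i assume "i + 1 < length (y # ys)"
    then have "Suc i + 1 < length (x # y # ys)" by simp
    then have "B_adj n k ((x # y # ys) ! Suc i) ((x # y # ys) ! (Suc i + 1))"
      using h unfolding B_walk_def by blast
    then show "B_adj n k ((y # ys) ! i) ((y # ys) ! (i + 1))" by simp
  qed simp
  ultimately show "B_adj n k x y \<and> B_walk n k (y # ys)" by simp
next
  assume h: "B_adj n k x y \<and> B_walk n k (y # ys)"
  show "B_walk n k (x # y # ys)" unfolding B_walk_def
  proof (intro conjI allI impI)
    show "set (x # y # ys) \<subseteq> B_verts n k" using h unfolding B_walk_def B_adj_def by auto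
    fix i assume i: "i + 1 < length (x # y # ys)"
    show "B_adj n k ((x # y # ys) ! i) ((x # y # ys) ! (i + 1))"
    proof (cases i)
      case 0 then show ?thesis using h by simp
    next
      case (Suc j)
      then have "j + 1 < length (y # ys)" using i by simp
      then have "B_adj n k ((y # ys) ! j) ((y # ys) ! (j + 1))" using h unfolding B_walk_def by blast
      then show ?thesis using Suc by simp
    qed
  qed simp
qed

lemma adj_sd: assumes "B_adj n k a b" shows "card (sd a b) = 1"
proof -
  have fa: "finite a" and fb: "finite b" using assms verts_fin unfolding B_adj_def by blast+
  have ca: "card a = k \<or> card a = k + 1" and cb: "card b = k \<or> card b = k + 1"
    using assms unfolding B_adj_def B_verts_def by auto
  show ?thesis
  proof (cases "a \<subset> b")
    case True
    then have "card a < card b" using fb psubset_card_mono by blast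
    then have "card b = card a + 1" using ca cb by auto
    moreover have "sd a b = b - a" using True by auto
    ultimately show ?thesis using True fb card_Diff_subset[of a b] fa by auto
  next
    case False
    then have T: "b \<subset> a" using assms unfolding B_adj_def by auto
    then have "card b < card a" using fa psubset_card_mono by blast
    then have "card a = card b + 1" using ca cb by auto
    moreover have "sd a b = a - b" using T by auto
    ultimately show ?thesis using T fa card_Diff_subset[of b a] fb by auto
  qed
qed

lemma sd_tri: assumes "finite a" "finite b" "finite c"
  shows "card (sd a c) \<le> card (sd a b) + card (sd b c)"
proof -
  have "card (sd a c) \<le> card (sd a b \<union> sd b c)"
    by (rule card_mono) (use assms in auto)
  also have "\<dots> \<le> card (sd a b) + card (sd b c)" by (rule card_Un_le)
  finally show ?thesis .
qed

lemma walk_lower: "B_walk n k xs \<Longrightarrow> card (sd (hd xs) (last xs)) \<le> length xs - 1"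
proof (induction xs)
  case Nil then show ?case by (simp add: B_walk_def)
next
  case (Cons x ys)
  show ?case
  proof (cases ys)
    case Nil then show ?thesis by simp
  next
    case (Cons y zs)
    have a: "B_adj n k x y" and w: "B_walk n k ys" using Cons.prems Cons by auto
    have ih: "card (sd y (last ys)) \<le> length ys - 1" using Cons.IH w Cons by simp
    have fx: "finite x" and fy: "finite y" using a verts_fin unfolding B_adj_def by blast+
    have "last ys \<in> B_verts n k" using w unfolding B_walk_def by auto
    then have fl: "finite (last ys)" by (rule verts_fin)
    have "card (sd x (last ys)) \<le> card (sd x y) + card (sd y (last ys))"
      using sd_tri[OF fx fy fl] .
    then show ?thesis using adj_sd[OF a] ih Cons by simp
  qed
qed

lemma walk_upper: "\<And>u v. u \<in> B_verts n k \<Longrightarrow> v \<in> B_verts n k \<Longrightarrow> card (sd u v) = d \<Longrightarrow>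
   \<exists>xs. B_walk n k xs \<and> hd xs = u \<and> last xs = v \<and> length xs = d + 1"
proof (induction d)
  case 0
  have "finite (sd u v)" using 0 verts_fin by blast
  then have "u = v" using 0 by auto
  then show ?case using 0 by (intro exI[of _ "[u]"]) simp
next
  case (Suc d)
  have fu: "finite u" and fv: "finite v" using Suc.prems verts_fin by blast+
  have cu: "card u = k \<or> card u = k + 1" and cv: "card v = k \<or> card v = k + 1"
    and su: "u \<subseteq> {1..n}" and sv: "v \<subseteq> {1..n}"
    using Suc.prems unfolding B_verts_def by auto
  have "\<exists>u'. B_adj n k u u' \<and> card (sd u' v) = d"
  proof (cases "card u = k")
    case True
    have "\<exists>x. x \<in> v - u"
    proof (rule ccontr)
      assume "\<not> ?thesis"
      then have "v \<subseteq> u" by auto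
      then have "card v \<le> card u" using fu card_mono by blast
      then have "card v = card u" using True cv by auto
      then have "v = u" using \<open>v \<subseteq> u\<close> fu card_subset_eq by blast
      then show False using Suc.prems by simp
    qed
    then obtain x where x: "x \<in> v" "x \<notin> u" by auto
    let ?u' = "insert x u"
    have "?u' \<in> B_verts n k" using x su sv True fu unfolding B_verts_def by auto
    then have adj: "B_adj n k u ?u'" using Suc.prems x unfolding B_adj_def by auto
    have "sd ?u' v = sd u v - {x}" using x by auto
    then have "card (sd ?u' v) = d" using Suc.prems x fu fv by simp
    then show ?thesis using adj by blast
  next
    case False
    then have ck: "card u = k + 1" using cu by simp
    have "\<exists>x. x \<in> u - v"
    proof (rule ccontr)
      assume "\<not> ?thesis"
      then have "u \<subseteq> v" by auto
      then have "card u \<le> card v" using fv card_mono by blast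
      then have "card v = card u" using ck cv by auto
      then have "u = v" using \<open>u \<subseteq> v\<close> fv card_subset_eq by metis
      then show False using Suc.prems by simp
    qed
    then obtain x where x: "x \<in> u" "x \<notin> v" by auto
    let ?u' = "u - {x}"
    have "?u' \<in> B_verts n k" using x su ck fu unfolding B_verts_def by auto
    then have adj: "B_adj n k u ?u'" using Suc.prems x unfolding B_adj_def by auto
    have "sd ?u' v = sd u v - {x}" using x by auto
    then have "card (sd ?u' v) = d" using Suc.prems x fu fv by simp
    then show ?thesis using adj by blast
  qed
  then obtain u' where a: "B_adj n k u u'" and c: "card (sd u' v) = d" by blast
  have "u' \<in> B_verts n k" using a unfolding B_adj_def by simp
  then obtain ys where ys: "B_walk n k ys" "hd ys = u'" "last ys = v" "length ys = d + 1"
    using Suc.IH Suc.prems c by blast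
  then obtain zs where zs: "ys = u' # zs" by (cases ys) auto
  show ?case
    by (intro exI[of _ "u # ys"]) (use ys zs a in auto)
qed

lemma dist_eq: assumes "u \<in> B_verts n k" "v \<in> B_verts n k"
  shows "B_dist n k u v = enat (card (sd u v))"
proof (rule antisym)
  obtain xs where xs: "B_walk n k xs" "hd xs = u" "last xs = v" "length xs = card (sd u v) + 1"
    using walk_upper[OF assms refl] by blast
  show "B_dist n k u v \<le> enat (card (sd u v))"
    unfolding B_dist_def by (rule INF_lower2[of xs]) (use xs in auto)
  show "enat (card (sd u v)) \<le> B_dist n k u v"
    unfolding B_dist_def by (rule INF_greatest) (use walk_lower in fastforce)
qed

lemma diam_eq:
  assumes "\<And>u v. u \<in> B_verts n k \<Longrightarrow> v \<in> B_verts n k \<Longrightarrow> card (sd u v) \<le> M"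
    and "u0 \<in> B_verts n k" "v0 \<in> B_verts n k" "card (sd u0 v0) = M"
  shows "B_diam n k = enat M"
proof (rule antisym)
  show "B_diam n k \<le> enat M"
    unfolding B_diam_def
    by (intro SUP_least) (simp add: dist_eq assms(1))
  have "enat M \<le> (SUP v \<in> B_verts n k. B_dist n k u0 v)"
    by (rule SUP_upper2[of v0]) (use assms dist_eq in auto)
  then show "enat M \<le> B_diam n k"
    unfolding B_diam_def by (rule order_trans) (rule SUP_upper, rule assms(2))
qed

lemma sd_bound: assumes "u \<in> B_verts n k" "v \<in> B_verts n k"
  shows "card (sd u v) \<le> 2 * k + 2" "card (sd u v) \<le> n"
proof -
  have fu: "finite u" and fv: "finite v" using assms verts_fin by blast+
  have cu: "card u \<le> k + 1" and cv: "card v \<le> k + 1" and s: "u \<union> v \<subseteq> {1..n}"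
    using assms unfolding B_verts_def by auto
  have "card (sd u v) \<le> card (u \<union> v)" by (rule card_mono) (use fu fv in auto)
  also have "\<dots> \<le> card u + card v" by (rule card_Un_le)
  finally show "card (sd u v) \<le> 2 * k + 2" using cu cv by simp
  have "card (sd u v) \<le> card {1..n}" by (rule card_mono) (use s in auto)
  then show "card (sd u v) \<le> n" by simp
qed

theorem corollary3p4:
  fixes n k :: nat
  assumes "n \<ge> 4" and "1 \<le> k" and "2 * k < n"
  shows "(n \<noteq> 2 * k + 1 \<longrightarrow> B_diam n k = enat (2 * k + 2)) \<and>
         (n = 2 * k + 1 \<longrightarrow> B_diam n k = enat (2 * k + 1))"
proof (intro conjI impI)
  assume "n \<noteq> 2 * k + 1"
  then have n: "2 * k + 2 \<le> n" using assms by simp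
  have u: "{1..k+1} \<in> B_verts n k" using n unfolding B_verts_def by auto
  have v: "{k+2..2*k+2} \<in> B_verts n k" using n unfolding B_verts_def by auto
  have "sd {1..k+1} {k+2..2*k+2} = {1..k+1} \<union> {k+2..2*k+2}" by auto
  moreover have "card ({1..k+1} \<union> {k+2..2*k+2}) = 2 * k + 2"
    by (subst card_Un_disjoint) auto
  ultimately show "B_diam n k = enat (2 * k + 2)"
    using diam_eq[OF _ u v] sd_bound by auto
next
  assume n: "n = 2 * k + 1"
  have u: "{1..k} \<in> B_verts n k" using n unfolding B_verts_def by auto
  have v: "{k+1..2*k+1} \<in> B_verts n k" using n unfolding B_verts_def by auto
  have "sd {1..k} {k+1..2*k+1} = {1..k} \<union> {k+1..2*k+1}" by auto
  moreover have "card ({1..k} \<union> {k+1..2*k+1}) = 2 * k + 1"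
    by (subst card_Un_disjoint) auto
  ultimately show "B_diam n k = enat (2 * k + 1)"
    using diam_eq[OF _ u v] sd_bound n by auto
qed

end
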